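(* Let $n\ge 2$. Then $\mathrm{A}=\Gamma^{\overline{01}}=\Gamma^{\overline{23}}$, where for a subspace $L\subseteq\mathrm{C}$ we write $\Gamma^{L}=\{T\in\mathrm{C}^\times: T L T^{-1}\subseteq L\}$.
   Context: Let $\mathrm{C}$ be either the real Clifford algebra $C\ell_{p,q}$ with $p+q=n$, or the complex Clifford algebra $C\ell(\mathbb{C}^n)$. It has identity $e$ and generators $e_1,\dots,e_n$ satisfying $e_ae_b+e_be_a=2\eta_{ab}e$. In the real case $\eta=\mathrm{diag}(1,\dots,1,-1,\dots,-1)$ with $p$ entries $+1$ and $q$ entries $-1$. In the complex case $\eta=I_n$. $\mathrm{C}^k$ is the grade-$k$ subspace, spanned by the products $e_{a_1}\cdots e_{a_k}$ with $a_1<\dots<a_k$. The reversion $U\mapsto\tilde U$ is the linear anti-automorphism acting on $\mathrm{C}^k$ as multiplication by $(-1)^{k(k-1)/2}$. For $m=0,1,2,3$ let $\mathrm{C}^{\overline m}=\bigoplus_{k\equiv m \pmod 4}\mathrm{C}^k$, and $\mathrm{C}^{\overline{kl}}=\mathrm{C}^{\overline k}\oplus\mathrm{C}^{\overline l}$. $\Gamma^{\overline{kl}}$ denotes $\Gamma^{L}$ with $L=\mathrm{C}^{\overline{kl}}$. $\mathrm{C}^\times$ is the group of invertible elements of $\mathrm{C}$. $\mathrm{Z}$ is the center of $\mathrm{C}$: $\mathrm{Z}=\mathrm{C}^0$ for $n$ even and $\mathrm{Z}=\mathrm{C}^0\oplus\mathrm{C}^n$ for $n$ odd. $\mathrm{Z}^\times$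 is the set of invertible elements of $\mathrm{Z}$. Define $\mathrm{A}:=\{T\in\mathrm{C}^\times:\ \tilde T T\in\mathrm{Z}^\times\}$. *)

theory Defs
  imports Complex_Main
begin

text \<open>Clifford algebra with n generators e_0,...,e_{n-1} (0-based indexing) and
diagonal metric eta, over a field 'a.  An element is a coefficient function on
basis blades; a blade is a subset of {..<n} (the set of indices a_1<...<a_k).\<close>

definition cl_carrier :: "nat \<Rightarrow> (nat set \<Rightarrow> 'a::field) set" where
  "cl_carrier n = {x. \<forall>A. x A \<noteq> 0 \<longrightarrow> A \<subseteq> {..<n}}"

text \<open>Sign/scalar of the product of basis blades e_A e_B = bsign A B e_(A sym-diff B).\<close>
definition bsign :: "(nat \<Rightarrow> 'a::field) \<Rightarrow> nat set \<Rightarrow> nat set \<Rightarrow> 'a" where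
  "bsign eta A B = (-1) ^ card {(a, b). a \<in> A \<and> b \<in> B \<and> b < a} * (\<Prod>c\<in>A \<inter> B. eta c)"

definition cl_mult :: "(nat \<Rightarrow> 'a::field) \<Rightarrow> nat \<Rightarrow> (nat set \<Rightarrow> 'a) \<Rightarrow> (nat set \<Rightarrow> 'a) \<Rightarrow> (nat set \<Rightarrow> 'a)" where
  "cl_mult eta n x y = (\<lambda>C. if C \<subseteq> {..<n} then
      (\<Sum>A\<in>Pow {..<n}. x A * y ((A - C) \<union> (C - A)) * bsign eta A ((A - C) \<union> (C - A)))
     else 0)"

definition cl_one :: "nat set \<Rightarrow> 'a::field" where
  "cl_one = (\<lambda>A. if A = {} then 1 else 0)"

definition cl_units :: "(nat \<Rightarrow> 'a::field) \<Rightarrow> nat \<Rightarrow> (nat set \<Rightarrow> 'a) set" where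
  "cl_units eta n = {T \<in> cl_carrier n. \<exists>S \<in> cl_carrier n.
      cl_mult eta n T S = cl_one \<and> cl_mult eta n S T = cl_one}"

definition cl_inv :: "(nat \<Rightarrow> 'a::field) \<Rightarrow> nat \<Rightarrow> (nat set \<Rightarrow> 'a) \<Rightarrow> (nat set \<Rightarrow> 'a)" where
  "cl_inv eta n T = (THE S. S \<in> cl_carrier n \<and> cl_mult eta n T S = cl_one \<and> cl_mult eta n S T = cl_one)"

definition cl_rev :: "(nat set \<Rightarrow> 'a::field) \<Rightarrow> (nat set \<Rightarrow> 'a)" where
  "cl_rev x = (\<lambda>A. (-1) ^ (card A * (card A - 1) div 2) * x A)"

definition cl_grade :: "nat \<Rightarrow> nat \<Rightarrow> (nat set \<Rightarrow> 'a::field) set" where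
  "cl_grade n k = {x \<in> cl_carrier n. \<forall>A. x A \<noteq> 0 \<longrightarrow> card A = k}"

definition cl_bar2 :: "nat \<Rightarrow> nat \<Rightarrow> nat \<Rightarrow> (nat set \<Rightarrow> 'a::field) set" where
  "cl_bar2 n k l = {x \<in> cl_carrier n. \<forall>A. x A \<noteq> 0 \<longrightarrow> (card A mod 4 = k \<or> card A mod 4 = l)}"

definition cl_center :: "nat \<Rightarrow> (nat set \<Rightarrow> 'a::field) set" where
  "cl_center n = (if even n then cl_grade n 0
     else {x \<in> cl_carrier n. \<forall>A. x A \<noteq> 0 \<longrightarrow> (card A = 0 \<or> card A = n)})"

definition cl_center_units :: "(nat \<Rightarrow> 'a::field) \<Rightarrow> nat \<Rightarrow> (nat set \<Rightarrow> 'a) set" where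
  "cl_center_units eta n = cl_center n \<inter> cl_units eta n"

definition cl_Gamma :: "(nat \<Rightarrow> 'a::field) \<Rightarrow> nat \<Rightarrow> (nat set \<Rightarrow> 'a) set \<Rightarrow> (nat set \<Rightarrow> 'a) set" where
  "cl_Gamma eta n L = {T \<in> cl_units eta n.
      \<forall>U \<in> L. cl_mult eta n (cl_mult eta n T U) (cl_inv eta n T) \<in> L}"

definition cl_A :: "(nat \<Rightarrow> 'a::field) \<Rightarrow> nat \<Rightarrow> (nat set \<Rightarrow> 'a) set" where
  "cl_A eta n = {T \<in> cl_units eta n. cl_mult eta n (cl_rev T) T \<in> cl_center_units eta n}"

text \<open>Metrics: real signature (p,q): first p generators square to 1, the rest to -1;
complex: all square to 1.\<close>
definition real_sig :: "nat \<Rightarrow> nat \<Rightarrow> real" where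
  "real_sig p = (\<lambda>c. if c < p then 1 else -1)"

definition complex_sig :: "nat \<Rightarrow> complex" where
  "complex_sig = (\<lambda>c. 1)"

end

theory Submission
  imports Defs
begin



definition sd :: "nat set \<Rightarrow> nat set \<Rightarrow> nat set" where
  "sd A B = (A - B) \<union> (B - A)"

definition sg :: "nat set \<Rightarrow> nat set \<Rightarrow> 'a::field" where
  "sg A B = (\<Prod>a\<in>A. \<Prod>b\<in>B. if b < a then -1 else 1)"

lemma pairs_Sigma: "{(a, b). a \<in> A \<and> b \<in> B \<and> b < a} = Sigma A (\<lambda>a. {b\<in>B. b < a})"
  by auto

lemma sign_sg:
  assumes "finite A" "finite B"
  shows "((-1::'a::field) ^ card {(a, b). a \<in> A \<and> b \<in> B \<and> b < a}) = sg A B"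
proof -
  have "card {(a, b). a \<in> A \<and> b \<in> B \<and> b < a} = (\<Sum>a\<in>A. card {b\<in>B. b < a})"
    unfolding pairs_Sigma using assms by simp
  hence "((-1::'a) ^ card {(a, b). a \<in> A \<and> b \<in> B \<and> b < a}) = (\<Prod>a\<in>A. (-1) ^ card {b\<in>B. b < a})"
    by (simp add: power_sum)
  also have "\<dots> = sg A B" unfolding sg_def
  proof (rule prod.cong[OF refl])
    fix a assume "a \<in> A"
    have "(\<Prod>b\<in>B. if b < a then -1 else (1::'a)) = (\<Prod>b\<in>{b\<in>B. b < a}. -1)"
      using assms prod.inter_filter[of B "\<lambda>_. -1::'a" "\<lambda>b. b < a"] by simp
    thus "(-1::'a) ^ card {b \<in> B. b < a} = (\<Prod>b\<in>B. if b < a then -1 else 1)" by simp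
  qed
  finally show ?thesis .
qed

lemma bsign_sg: "finite A \<Longrightarrow> finite B \<Longrightarrow> bsign eta A B = sg A B * (\<Prod>c\<in>A \<inter> B. eta c)"
  unfolding bsign_def by (simp add: sign_sg)

lemma sq_aux: "z * z = (1::'a::comm_ring_1) \<Longrightarrow> (x * z) * (y * z) = x * y"
proof -
  assume h: "z * z = 1"
  have "(x * z) * (y * z) = x * y * (z * z)" by (simp add: mult_ac)
  thus ?thesis using h by simp
qed

lemma prod_sd:
  fixes g :: "nat \<Rightarrow> 'a::field"
  assumes "finite A" "finite B" "\<And>x. g x * g x = 1"
  shows "prod g (sd A B) = prod g A * prod g B"
proof -
  have e1: "prod g A = prod g (A - B) * prod g (A \<inter> B)"
  proof -
    have "A - (A \<inter> B) = A - B" by blast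
    thus ?thesis using prod.subset_diff[of "A \<inter> B" A g] assms(1) by simp
  qed
  have e2: "prod g B = prod g (B - A) * prod g (A \<inter> B)"
  proof -
    have "B - (A \<inter> B) = B - A" "A \<inter> B \<subseteq> B" by blast+
    thus ?thesis using prod.subset_diff[of "A \<inter> B" B g] assms(2) by simp
  qed
  have e3: "prod g (sd A B) = prod g (A - B) * prod g (B - A)"
    unfolding sd_def using assms by (simp add: prod.union_disjoint Int_Diff_disjoint inf_commute disjoint_iff)
  have e4: "prod g (A \<inter> B) * prod g (A \<inter> B) = 1"
    using assms by (simp add: prod.distrib[symmetric])
  show ?thesis unfolding e1 e2 e3 using sq_aux[OF e4] by simp
qed

lemma ifsq [simp]: "(if P then -1 else (1::'a::field)) * (if P then -1 else 1) = 1"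
  by simp

lemma sg_pm: "finite B \<Longrightarrow> (\<Prod>b\<in>B. if b < a then -1 else (1::'a::field)) * (\<Prod>b\<in>B. if b < a then -1 else 1) = 1"
  by (simp add: prod.distrib[symmetric])

lemma sg_sd1: "finite A \<Longrightarrow> finite B \<Longrightarrow> finite E \<Longrightarrow> (sg (sd A B) E :: 'a::field) = sg A E * sg B E"
  unfolding sg_def by (rule prod_sd) (auto simp: prod.distrib[symmetric])

lemma sg_sd2: "finite A \<Longrightarrow> finite B \<Longrightarrow> finite E \<Longrightarrow> (sg A (sd B E) :: 'a::field) = sg A B * sg A E"
  unfolding sg_def
  by (simp add: prod.distrib[symmetric] prod_sd)

lemma finite_sd: "finite A \<Longrightarrow> finite B \<Longrightarrow> finite (sd A B)"
  unfolding sd_def by auto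

lemma eta_cocycle:
  assumes "finite A" "finite B" "finite E"
  shows "(\<Prod>c\<in>A \<inter> B. eta c) * (\<Prod>c\<in>sd A B \<inter> E. eta c) = (\<Prod>c\<in>B \<inter> E. (eta c :: 'a::field)) * (\<Prod>c\<in>A \<inter> sd B E. eta c)"
proof -
  let ?S = "(A \<inter> B) \<union> (A \<inter> E) \<union> (B \<inter> E)"
  have "(\<Prod>c\<in>A \<inter> B. eta c) * (\<Prod>c\<in>sd A B \<inter> E. eta c) = (\<Prod>c\<in>(A \<inter> B) \<union> (sd A B \<inter> E). eta c)"
    using assms by (subst prod.union_disjoint) (auto simp: sd_def)
  also have "(A \<inter> B) \<union> (sd A B \<inter> E) = ?S" by (auto simp: sd_def)
  also have "?S = (B \<inter> E) \<union> (A \<inter> sd B E)" by (auto simp: sd_def)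
  also have "(\<Prod>c\<in>(B \<inter> E) \<union> (A \<inter> sd B E). eta c) = (\<Prod>c\<in>B \<inter> E. eta c) * (\<Prod>c\<in>A \<inter> sd B E. eta c)"
    using assms by (subst prod.union_disjoint) (auto simp: sd_def)
  finally show ?thesis .
qed

lemma bsign_cocycle:
  assumes "finite A" "finite B" "finite E"
  shows "bsign eta A B * bsign eta (sd A B) E = bsign eta B E * (bsign eta A (sd B E) :: 'a::field)"
proof -
  have fs: "finite (sd A B)" "finite (sd B E)" using assms finite_sd by auto
  show ?thesis
    using assms fs eta_cocycle[OF assms, of eta]
    by (simp add: bsign_sg sg_sd1 sg_sd2 mult_ac)
qed




lemma count_pairs:
  fixes A B :: "nat set"
  assumes "finite A" "finite B"
  shows "card {(a, b). a \<in> A \<and> b \<in> B \<and> b < a} + card {(a, b). a \<in> B \<and> b \<in> A \<and> b < a}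
         + card (A \<inter> B) = card A * card B"
proof -
  let ?X1 = "{(a, b). a \<in> A \<and> b \<in> B \<and> b < a}"
  let ?X2 = "{(a, b). a \<in> A \<and> b \<in> B \<and> a < b}"
  let ?X3 = "{(a, b). a \<in> A \<and> b \<in> B \<and> a = b}"
  have fin: "finite (A \<times> B)" using assms by simp
  have u: "A \<times> B = ?X1 \<union> ?X2 \<union> ?X3" by auto
  have f1: "finite ?X1" "finite ?X2" "finite ?X3" by (rule finite_subset[OF _ fin], auto)+
  have c2: "card ?X2 = card {(a, b). a \<in> B \<and> b \<in> A \<and> b < a}"
    by (rule bij_betw_same_card[of "\<lambda>(a,b). (b,a)"]) (auto simp: bij_betw_def inj_on_def image_def)
  have c3: "card ?X3 = card (A \<inter> B)"
    by (rule bij_betw_same_card[of "\<lambda>(a,b). a"]) (auto simp: bij_betw_def inj_on_def image_def)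
  have "card (A \<times> B) = card ?X1 + card ?X2 + card ?X3"
    unfolding u using f1 by (subst card_Un_disjoint, auto)+
  thus ?thesis using c2 c3 by (simp add: card_cartesian_product)
qed

lemma arith_aux: "(i::nat) + j + k = m \<Longrightarrow> m + k + i = j + 2 * (i + k)" by simp

lemma neg1_pow: "x + 2 * y = z \<Longrightarrow> (-1::'a::ring_1) ^ z = (-1) ^ x"
  by (auto simp: power_add power_mult)

lemma bsign_swap:
  assumes "finite A" "finite B"
  shows "bsign eta B A = (-1) ^ (card A * card B + card (A \<inter> B)) * (bsign eta A B :: 'a::field)"
proof -
  let ?i = "card {(a, b). a \<in> A \<and> b \<in> B \<and> b < a}"
  let ?j = "card {(a, b). a \<in> B \<and> b \<in> A \<and> b < a}"
  have e: "card A * card B + card (A \<inter> B) + ?i = ?j + 2 * (?i + card (A \<inter> B))"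
    using count_pairs[OF assms] arith_aux by blast
  have "(-1::'a) ^ ?j = (-1) ^ (card A * card B + card (A \<inter> B)) * (-1) ^ ?i"
    using neg1_pow[OF e[symmetric], where 'a='a] by (simp add: power_add)
  thus ?thesis unfolding bsign_def by (simp add: Int_commute mult.assoc)
qed

definition tri :: "nat \<Rightarrow> nat" where "tri k = k * (k - 1) div 2"

lemma tri2: "2 * tri k = k * (k - 1)"
  unfolding tri_def by (cases k) auto

lemma tri_add: "tri (x + y) = tri x + tri y + x * y"
proof -
  have "2 * tri (x + y) = 2 * (tri x + tri y + x * y)"
    unfolding distrib_left tri2 by (cases x; cases y) (auto simp: algebra_simps)
  thus ?thesis by simp
qed

lemma tri_sd:
  assumes "k \<le> a" "k \<le> b"
  shows "tri (a + b - 2 * k) + 2 * (k * k + k * (a + b - 2 * k)) = tri a + tri b + a * b + k"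
proof -
  define s where "s = a + b - 2 * k"
  have ab: "a + b = s + 2 * k" using assms s_def by simp
  have t2k: "tri (2 * k) + k = 2 * (k * k)"
    using tri2[of "2*k"] by (cases k) (auto simp: algebra_simps)
  have "tri a + tri b + a * b = tri (s + 2 * k)" using tri_add[of a b] ab by simp
  also have "\<dots> = tri s + tri (2 * k) + s * (2 * k)" by (rule tri_add)
  finally have e: "tri a + tri b + a * b = tri s + tri (2 * k) + s * (2 * k)" .
  have "s * (2 * k) = 2 * (k * s)" by simp
  hence "tri s + 2 * (k * k + k * s) = tri a + tri b + a * b + k" using e t2k unfolding distrib_left by linarith
  thus ?thesis unfolding s_def .
qed

definition rvs :: "nat set \<Rightarrow> 'a::field" where
  "rvs A = (-1) ^ (card A * (card A - 1) div 2)"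

lemma card_sd: "finite A \<Longrightarrow> finite B \<Longrightarrow> card (sd A B) = card A + card B - 2 * card (A \<inter> B)"
proof -
  assume f: "finite A" "finite B"
  have 1: "card (sd A B) = card (A - B) + card (B - A)"
    unfolding sd_def using f by (subst card_Un_disjoint) auto
  have 2: "card (A - B) = card A - card (A \<inter> B)" using f
    by (intro card_Diff_subset_Int) auto
  have 3: "card (B - A) = card B - card (B \<inter> A)" using f
    by (intro card_Diff_subset_Int) auto
  have 4: "B \<inter> A = A \<inter> B" by auto
  have 5: "card (A \<inter> B) \<le> card A" "card (A \<inter> B) \<le> card B"
    by (rule card_mono[OF f(1)], blast) (rule card_mono[OF f(2)], blast)
  show ?thesis unfolding 1 2 3 4 using 5 by arith
qed

lemma rvs_tri: "rvs A = (-1) ^ tri (card A)"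
  unfolding rvs_def tri_def ..

lemma rvs_sign:
  assumes "finite A" "finite B"
  shows "rvs (sd A B) * bsign eta A B = rvs A * rvs B * (bsign eta B A :: 'a::field)"
proof -
  let ?a = "card A" and ?b = "card B" and ?k = "card (A \<inter> B)"
  have k: "?k \<le> ?a" "?k \<le> ?b"
    by (rule card_mono[OF assms(1)], blast) (rule card_mono[OF assms(2)], blast)
  have "(-1::'a) ^ tri (?a + ?b - 2 * ?k) = (-1) ^ (tri ?a + tri ?b + (?a * ?b + ?k))"
    using neg1_pow[OF tri_sd[OF k], symmetric] by (simp only: add.assoc)
  hence r: "rvs (sd A B) = rvs A * rvs B * ((-1::'a) ^ (?a * ?b + ?k))"
    unfolding rvs_tri card_sd[OF assms] by (simp only: power_add)
  show ?thesis unfolding r bsign_swap[OF assms, of eta] by (simp only: mult.assoc)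
qed




lemma sd_sd1[simp]: "sd A (sd A C) = C" unfolding sd_def by blast
lemma sd_sd2[simp]: "sd (sd A C) C = A" unfolding sd_def by blast
lemma sd_sub: "A \<subseteq> N \<Longrightarrow> B \<subseteq> N \<Longrightarrow> sd A B \<subseteq> N" unfolding sd_def by blast
lemma sd_empty1[simp]: "sd {} A = A" unfolding sd_def by blast
lemma sd_empty2[simp]: "sd A {} = A" unfolding sd_def by blast
lemma sd_self[simp]: "sd A A = {}" unfolding sd_def by blast
lemma sd_sd3[simp]: "sd B (sd A B) = A" unfolding sd_def by blast
lemma sd_sd4[simp]: "sd (sd A B) A = B" unfolding sd_def by blast
lemma sd_empty_iff[simp]: "sd A C = {} \<longleftrightarrow> A = C" unfolding sd_def by blast
lemma sd_comm: "sd A B = sd B A" unfolding sd_def by blast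
lemma sd_eq_iff: "sd A C = B \<longleftrightarrow> A = sd B C" unfolding sd_def by blast

lemma rvs_sq: "rvs A * (rvs A :: 'a::field) = 1"
  by (simp add: rvs_def flip: power_add)

locale CL = fixes eta :: "nat \<Rightarrow> 'a::field" and n :: nat
begin

abbreviation mul (infixl "\<odot>" 70) where "x \<odot> y \<equiv> cl_mult eta n x y"
abbreviation PP where "PP \<equiv> Pow {..<n}"
abbreviation bs where "bs \<equiv> bsign eta"

lemma finPP: "finite PP" by simp
lemma fin_sub: "A \<in> PP \<Longrightarrow> finite A" using finite_subset by auto

lemma mul_sd: "C \<subseteq> {..<n} \<Longrightarrow> (x \<odot> y) C = (\<Sum>A\<in>PP. x A * y (sd A C) * bs A (sd A C))"
  by (simp add: cl_mult_def sd_def)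

lemma mul_out: "\<not> C \<subseteq> {..<n} \<Longrightarrow> (x \<odot> y) C = 0"
  by (simp add: cl_mult_def)

lemma reindex_sd: "A \<in> PP \<Longrightarrow> (\<Sum>C\<in>PP. f C) = (\<Sum>B\<in>PP. f (sd A B))"
  by (rule sum.reindex_bij_witness[of _ "sd A" "sd A"]) (auto simp: sd_sub)

lemma reindex_sd2: "C \<in> PP \<Longrightarrow> (\<Sum>B\<in>PP. f B) = (\<Sum>A\<in>PP. f (sd A C))"
  by (rule sum.reindex_bij_witness[of _ "\<lambda>B. sd B C" "\<lambda>B. sd B C"]) (auto simp: sd_sub)

lemma assoc: "(x \<odot> y) \<odot> z = x \<odot> (y \<odot> z)"
proof (rule ext)
  fix D
  show "((x \<odot> y) \<odot> z) D = (x \<odot> (y \<odot> z)) D"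
  proof (cases "D \<subseteq> {..<n}")
    case False thus ?thesis by (simp add: mul_out)
  next
    case True
    have "((x \<odot> y) \<odot> z) D = (\<Sum>C\<in>PP. (\<Sum>A\<in>PP. x A * y (sd A C) * bs A (sd A C)) * z (sd C D) * bs C (sd C D))"
      using True by (simp add: mul_sd)
    also have "\<dots> = (\<Sum>C\<in>PP. \<Sum>A\<in>PP. x A * y (sd A C) * z (sd C D) * (bs A (sd A C) * bs C (sd C D)))"
      by (simp add: sum_distrib_right sum_distrib_left mult_ac)
    also have "\<dots> = (\<Sum>A\<in>PP. \<Sum>C\<in>PP. x A * y (sd A C) * z (sd C D) * (bs A (sd A C) * bs C (sd C D)))"
      by (rule sum.swap)
    also have "\<dots> = (\<Sum>A\<in>PP. \<Sum>B\<in>PP. x A * y B * z (sd (sd A B) D) * (bs A B * bs (sd A B) (sd (sd A B) D)))"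
      by (rule sum.cong[OF refl], subst reindex_sd, auto)
    also have "\<dots> = (\<Sum>A\<in>PP. \<Sum>B\<in>PP. x A * y B * z (sd B (sd A D)) * (bs B (sd B (sd A D)) * bs A (sd A D)))"
    proof (intro sum.cong refl)
      fix A B assume AB: "A \<in> PP" "B \<in> PP"
      have e1: "sd (sd A B) D = sd B (sd A D)" unfolding sd_def by blast
      have e2: "sd B (sd B (sd A D)) = sd A D" by simp
      have fD: "finite D" using True finite_subset by blast
      have fE: "finite (sd B (sd A D))"
        using finite_sd[OF fin_sub[OF AB(2)] finite_sd[OF fin_sub[OF AB(1)] fD]] .
      show "x A * y B * z (sd (sd A B) D) * (bs A B * bs (sd A B) (sd (sd A B) D)) =
            x A * y B * z (sd B (sd A D)) * (bs B (sd B (sd A D)) * bs A (sd A D))"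
        unfolding e1 using bsign_cocycle[OF fin_sub[OF AB(1)] fin_sub[OF AB(2)] fE, of eta] e2 by simp
    qed
    also have "\<dots> = (x \<odot> (y \<odot> z)) D"
      using True by (simp add: mul_sd sd_sub sum_distrib_left sum_distrib_right mult_ac)
    finally show ?thesis .
  qed
qed


lemma bs_empty1[simp]: "bs {} C = 1" by (simp add: bsign_def)
lemma bs_empty2[simp]: "bs C {} = 1" by (simp add: bsign_def)

lemma mul_carrier: "x \<odot> y \<in> cl_carrier n"
  by (auto simp: cl_carrier_def cl_mult_def)

lemma carrier_out: "x \<in> cl_carrier n \<Longrightarrow> \<not> A \<subseteq> {..<n} \<Longrightarrow> x A = 0"
  by (auto simp: cl_carrier_def)

lemma one_carrier: "cl_one \<in> cl_carrier n"
  by (auto simp: cl_carrier_def cl_one_def)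

lemma one_left: "x \<in> cl_carrier n \<Longrightarrow> cl_one \<odot> x = x"
proof (rule ext)
  fix C assume x: "x \<in> cl_carrier n"
  show "(cl_one \<odot> x) C = x C"
  proof (cases "C \<subseteq> {..<n}")
    case False thus ?thesis using x by (simp add: mul_out carrier_out)
  next
    case True
    have "(cl_one \<odot> x) C = (\<Sum>A\<in>PP. if A = {} then x (sd A C) * bs A (sd A C) else 0)"
      using True by (intro trans[OF mul_sd sum.cong]) (auto simp: cl_one_def)
    also have "\<dots> = x C" by (simp add: sum.delta')
    finally show ?thesis .
  qed
qed

lemma one_right: "x \<in> cl_carrier n \<Longrightarrow> x \<odot> cl_one = x"
proof (rule ext)
  fix C assume x: "x \<in> cl_carrier n"
  show "(x \<odot> cl_one) C = x C"
  proof (cases "C \<subseteq> {..<n}")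
    case False thus ?thesis using x by (simp add: mul_out carrier_out)
  next
    case True
    have "(x \<odot> cl_one) C = (\<Sum>A\<in>PP. if A = C then x A * bs A (sd A C) else 0)"
      using True by (intro trans[OF mul_sd sum.cong]) (auto simp: cl_one_def)
    also have "\<dots> = x C" using True by (simp add: sum.delta')
    finally show ?thesis .
  qed
qed

lemma rev_rvs: "cl_rev x = (\<lambda>A. rvs A * x A)"
  by (simp add: cl_rev_def rvs_def)


lemma rev_rev: "cl_rev (cl_rev x) = x"
  by (simp add: rev_rvs mult.assoc[symmetric] rvs_sq)

lemma rev_carrier: "x \<in> cl_carrier n \<Longrightarrow> cl_rev x \<in> cl_carrier n"
  by (auto simp: cl_carrier_def rev_rvs)

lemma rev_one: "cl_rev cl_one = cl_one"
  by (auto simp: rev_rvs cl_one_def rvs_def)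

lemma rev_mul: "cl_rev (x \<odot> y) = cl_rev y \<odot> cl_rev x"
proof (rule ext)
  fix C
  show "cl_rev (x \<odot> y) C = (cl_rev y \<odot> cl_rev x) C"
  proof (cases "C \<subseteq> {..<n}")
    case False thus ?thesis by (simp add: mul_out rev_rvs)
  next
    case True
    have CP: "C \<in> PP" using True by simp
    have "(cl_rev y \<odot> cl_rev x) C = (\<Sum>B\<in>PP. (rvs B * y B) * (rvs (sd B C) * x (sd B C)) * bs B (sd B C))"
      using True by (simp add: mul_sd rev_rvs)
    also have "\<dots> = (\<Sum>A\<in>PP. (rvs (sd A C) * y (sd A C)) * (rvs A * x A) * bs (sd A C) A)"
      by (subst reindex_sd2[OF CP]) simp
    also have "\<dots> = (\<Sum>A\<in>PP. rvs C * (x A * y (sd A C) * bs A (sd A C)))"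
    proof (intro sum.cong refl)
      fix A assume A: "A \<in> PP"
      have fC: "finite (sd A C)" using A True by (meson fin_sub finite_sd finite_subset finite_lessThan)
      have "rvs (sd A (sd A C)) * bs A (sd A C) = rvs A * rvs (sd A C) * (bs (sd A C) A :: 'a)"
        by (rule rvs_sign[OF fin_sub[OF A] fC])
      hence "rvs C * bs A (sd A C) = rvs A * rvs (sd A C) * (bs (sd A C) A :: 'a)" by simp
      thus "(rvs (sd A C) * y (sd A C)) * (rvs A * x A) * bs (sd A C) A = rvs C * (x A * y (sd A C) * bs A (sd A C))"
        by (simp add: algebra_simps)
    qed
    also have "\<dots> = cl_rev (x \<odot> y) C"
      using True by (simp add: mul_sd rev_rvs sum_distrib_left)
    finally show ?thesis by simp
  qed
qed

definition bas :: "nat set \<Rightarrow> nat set \<Rightarrow> 'a" where "bas B = (\<lambda>X. if X = B then 1 else 0)"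

lemma bas_carrier: "B \<subseteq> {..<n} \<Longrightarrow> bas B \<in> cl_carrier n"
  by (auto simp: bas_def cl_carrier_def)

lemma comm_basis:
  assumes A: "A \<subseteq> {..<n}" and B: "B \<subseteq> {..<n}" and c: "z \<odot> bas B = bas B \<odot> z" and zA: "z A \<noteq> 0"
  shows "bs A B = bs B A"
proof -
  have C: "sd A B \<subseteq> {..<n}" using A B by (rule sd_sub)
  have 1: "(z \<odot> bas B) (sd A B) = z A * bs A B"
  proof -
    have "(z \<odot> bas B) (sd A B) = (\<Sum>X\<in>PP. if X = A then z X * bs X (sd X (sd A B)) else 0)"
      using C by (intro trans[OF mul_sd sum.cong]) (auto simp: bas_def sd_eq_iff)
    thus ?thesis using A by (simp add: sum.delta')
  qed
  have 2: "(bas B \<odot> z) (sd A B) = z A * bs B A"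
  proof -
    have "(bas B \<odot> z) (sd A B) = (\<Sum>X\<in>PP. if X = B then z (sd X (sd A B)) * bs X (sd X (sd A B)) else 0)"
      using C by (intro trans[OF mul_sd sum.cong]) (auto simp: bas_def)
    thus ?thesis using B by (simp add: sum.delta')
  qed
  show ?thesis using 1 2 c zA by simp
qed

lemma comm_general:
  assumes h: "\<And>A B. A \<in> PP \<Longrightarrow> B \<in> PP \<Longrightarrow> z A \<noteq> 0 \<Longrightarrow> bs A B = bs B A"
  shows "z \<odot> x = x \<odot> z"
proof (rule ext)
  fix C
  show "(z \<odot> x) C = (x \<odot> z) C"
  proof (cases "C \<subseteq> {..<n}")
    case False thus ?thesis by (simp add: mul_out)
  next
    case True
    have CP: "C \<in> PP" using True by simp
    have "(x \<odot> z) C = (\<Sum>B\<in>PP. x B * z (sd B C) * bs B (sd B C))"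
      using True by (simp add: mul_sd)
    also have "\<dots> = (\<Sum>A\<in>PP. x (sd A C) * z A * bs (sd A C) A)"
      by (subst reindex_sd2[OF CP]) simp
    also have "\<dots> = (\<Sum>A\<in>PP. z A * x (sd A C) * bs A (sd A C))"
    proof (intro sum.cong refl)
      fix A assume A: "A \<in> PP"
      show "x (sd A C) * z A * bs (sd A C) A = z A * x (sd A C) * bs A (sd A C)"
      proof (cases "z A = 0")
        case False
        have "sd A C \<in> PP" using A True sd_sub by auto
        thus ?thesis using h[OF A _ False] by simp
      qed simp
    qed
    also have "\<dots> = (z \<odot> x) C" using True by (simp add: mul_sd)
    finally show ?thesis by simp
  qed
qed

end



lemma tri_mod4: "even (tri k) \<longleftrightarrow> k mod 4 = 0 \<or> k mod 4 = 1"
proof -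
  define q where "q = k div 4"
  define r where "r = k mod 4"
  have k: "k = 4 * q + r" unfolding q_def r_def by simp
  have r: "r < 4" unfolding r_def by simp
  have t4: "even (tri (4 * q))"
  proof -
    have "2 * tri (4 * q) = 4 * q * (4 * q - 1)" by (rule tri2)
    hence "tri (4 * q) = 2 * (q * (4 * q - 1))" by simp
    thus ?thesis by simp
  qed
  have "tri k = tri (4 * q) + tri r + 4 * q * r" unfolding k by (rule tri_add)
  hence e: "even (tri k) \<longleftrightarrow> even (tri r)" using t4 by simp
  have km: "k mod 4 = r" using k r by simp
  have "r = 0 \<or> r = 1 \<or> r = 2 \<or> r = 3" using r by auto
  thus ?thesis unfolding e km by (auto simp: tri_def)
qed

lemma rvs_val: "(rvs A :: 'a::field) = (if card A mod 4 = 0 \<or> card A mod 4 = 1 then 1 else -1)"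
  unfolding rvs_tri using tri_mod4[of "card A"] by (auto simp: neg_one_even_power neg_one_odd_power)

lemma bs_nz:
  assumes "finite A" "finite B" "\<And>c. eta c \<noteq> (0::'a::field)"
  shows "bsign eta A B \<noteq> 0"
  unfolding bsign_def using assms by simp

lemma bs_comm_iff:
  fixes eta :: "nat \<Rightarrow> 'a::field"
  assumes "finite A" "finite B" "\<And>c. eta c \<noteq> 0" "(2::'a) \<noteq> 0"
  shows "bsign eta A B = bsign eta B A \<longleftrightarrow> even (card A * card B + card (A \<inter> B))"
proof -
  define m where "m = card A * card B + card (A \<inter> B)"
  define b where "b = bsign eta A B"
  have nz: "b \<noteq> 0" unfolding b_def by (rule bs_nz[OF assms(1-3)])
  have sw: "bsign eta B A = (-1) ^ m * b"
    unfolding m_def b_def by (rule bsign_swap[OF assms(1,2)])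
  have "b = (-1) ^ m * b \<longleftrightarrow> even m"
  proof (cases "even m")
    case True
    hence "(-1::'a) ^ m = 1" by simp
    thus ?thesis using True by simp
  next
    case False
    hence m1: "(-1::'a) ^ m = -1" by (simp add: neg_one_odd_power)
    have "b \<noteq> - b"
    proof
      assume h: "b = - b"
      have "2 * b = b + b" by (rule mult_2)
      also have "\<dots> = - b + b" using h by (rule arg_cong[where f="\<lambda>x. x + b"])
      also have "\<dots> = 0" by simp
      finally have "2 * b = 0" .
      thus False using nz assms(4) mult_eq_0_iff by blast
    qed
    moreover have "(-1) ^ m * b = - b" using m1 by simp
    ultimately have "b \<noteq> (-1) ^ m * b" by metis
    thus ?thesis using False by simp
  qed
  thus ?thesis unfolding sw m_def[symmetric] b_def[symmetric] .
qed


locale CL2 = CL eta n for eta :: "nat \<Rightarrow> 'a::field" and n +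
  assumes two: "(2::'a) \<noteq> 0" and eta_nz: "\<And>c. eta c \<noteq> 0"
begin

lemma neg_ne: "(x::'a) \<noteq> 0 \<Longrightarrow> x \<noteq> - x"
proof
  assume nz: "x \<noteq> 0" and h: "x = - x"
  have "2 * x = x + x" by (rule mult_2)
  also have "\<dots> = - x + x" using h by (rule arg_cong[where f="\<lambda>y. y + x"])
  also have "\<dots> = 0" by simp
  finally have "2 * x = 0" .
  thus False using nz two by simp
qed

lemma comm_iff:
  assumes "A \<in> PP" "B \<in> PP"
  shows "bs A B = bs B A \<longleftrightarrow> even (card A * card B + card (A \<inter> B))"
  by (rule bs_comm_iff[OF fin_sub[OF assms(1)] fin_sub[OF assms(2)] eta_nz two])

lemma center_support:
  assumes z: "z \<in> cl_center n" and zA: "z A \<noteq> 0"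
  shows "A = {} \<or> (A = {..<n} \<and> odd n)"
proof -
  have zc: "z \<in> cl_carrier n" using z by (auto simp: cl_center_def cl_grade_def split: if_splits)
  hence AN: "A \<subseteq> {..<n}" using zA by (auto simp: cl_carrier_def)
  have fA: "finite A" using AN finite_subset by blast
  have "card A = 0 \<or> (card A = n \<and> odd n)"
    using z zA by (auto simp: cl_center_def cl_grade_def split: if_splits)
  thus ?thesis
  proof
    assume "card A = 0" thus ?thesis using fA by simp
  next
    assume h: "card A = n \<and> odd n"
    have "A = {..<n}" using card_subset_eq[OF _ AN] h by simp
    thus ?thesis using h by simp
  qed
qed

lemma support_center:
  assumes zc: "z \<in> cl_carrier n" and h: "\<And>A. z A \<noteq> 0 \<Longrightarrow> A = {} \<or> (A = {..<n} \<and> odd n)"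
  shows "z \<in> cl_center n"
proof (cases "even n")
  case True
  have "\<forall>A. z A \<noteq> 0 \<longrightarrow> card A = 0"
  proof (intro allI impI)
    fix A assume zA: "z A \<noteq> 0"
    have "A = {}" using h[OF zA] True by auto
    thus "card A = 0" by simp
  qed
  thus ?thesis using True zc by (simp add: cl_center_def cl_grade_def)
next
  case False
  have "\<forall>A. z A \<noteq> 0 \<longrightarrow> card A = 0 \<or> card A = n"
  proof (intro allI impI)
    fix A assume zA: "z A \<noteq> 0"
    have "A = {} \<or> A = {..<n}" using h[OF zA] by auto
    thus "card A = 0 \<or> card A = n" by auto
  qed
  thus ?thesis using False zc by (simp add: cl_center_def)
qed

lemma center_comm: "z \<in> cl_center n \<Longrightarrow> z \<odot> x = x \<odot> z"
proof (rule comm_general)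
  fix A B assume z: "z \<in> cl_center n" and A: "A \<in> PP" and B: "B \<in> PP" and zA: "z A \<noteq> 0"
  from center_support[OF z zA] show "bs A B = bs B A"
  proof
    assume "A = {}" thus ?thesis by simp
  next
    assume h: "A = {..<n} \<and> odd n"
    have "{..<n} \<inter> B = B" using B by auto
    hence "card A * card B + card (A \<inter> B) = (n + 1) * card B" using h by simp
    moreover have "even (n + 1)" using h by simp
    ultimately have "even (card A * card B + card (A \<inter> B))" by simp
    thus ?thesis using comm_iff[OF A B] by simp
  qed
qed

lemma comm1_center:
  assumes zc: "z \<in> cl_carrier n" and c: "\<And>i. i < n \<Longrightarrow> z \<odot> bas {i} = bas {i} \<odot> z"
  shows "z \<in> cl_center n"
proof (rule support_center[OF zc])
  fix A assume zA: "z A \<noteq> 0"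
  have AN: "A \<subseteq> {..<n}" using zA zc by (auto simp: cl_carrier_def)
  have key: "even (card A + card (A \<inter> {i}))" if i: "i < n" for i
  proof -
    have "bs A {i} = bs {i} A" using comm_basis[OF AN _ c[OF i] zA] i by simp
    hence "even (card A * card {i} + card (A \<inter> {i}))" using comm_iff AN i by simp
    thus ?thesis by simp
  qed
  show "A = {} \<or> (A = {..<n} \<and> odd n)"
  proof (cases "A = {}")
    case False
    then obtain a where a: "a \<in> A" by blast
    have "A \<inter> {a} = {a}" using a by auto
    hence oA: "odd (card A)" using key[of a] a AN by auto
    have AeN: "A = {..<n}"
    proof (rule ccontr)
      assume "A \<noteq> {..<n}"
      then obtain j where j: "j < n" "j \<notin> A" using AN by auto
      have "A \<inter> {j} = {}" using j by auto
      thus False using key[OF j(1)] oA by simp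
    qed
    thus ?thesis using oA by simp
  qed simp
qed

lemma comm23_center:
  assumes zc: "z \<in> cl_carrier n" and rz: "cl_rev z = z" and n2: "n \<ge> 2"
    and c: "\<And>B. B \<subseteq> {..<n} \<Longrightarrow> card B = 2 \<or> card B = 3 \<Longrightarrow> z \<odot> bas B = bas B \<odot> z"
  shows "z \<in> cl_center n"
proof (rule support_center[OF zc])
  fix A assume zA: "z A \<noteq> 0"
  have AN: "A \<subseteq> {..<n}" using zA zc by (auto simp: cl_carrier_def)
  have key: "even (card A * card B + card (A \<inter> B))" if B: "B \<subseteq> {..<n}" "card B = 2 \<or> card B = 3" for B
  proof -
    have "bs A B = bs B A" using comm_basis[OF AN B(1) c[OF B] zA] .
    thus ?thesis using comm_iff AN B by simp
  qed
  have AE: "A = {} \<or> A = {..<n}"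
  proof (rule ccontr)
    assume "\<not> (A = {} \<or> A = {..<n})"
    then obtain a j where a: "a \<in> A" and j: "j < n" "j \<notin> A" using AN by blast
    have aj: "a \<noteq> j" using a j by auto
    have "a < n" using a AN by auto
    hence B: "{a, j} \<subseteq> {..<n}" "card {a, j} = 2 \<or> card {a, j} = 3" using j aj by auto
    have "A \<inter> {a, j} = {a}" using a j by auto
    hence "even (card A * 2 + 1)" using key[OF B] aj by simp
    thus False by simp
  qed
  show "A = {} \<or> (A = {..<n} \<and> odd n)"
  proof (cases "A = {}")
    case False
    hence AN': "A = {..<n}" using AE by simp
    show ?thesis
    proof (cases "n = 2")
      case True
      have "(rvs A :: 'a) = -1" using AN' True by (simp add: rvs_val)
      moreover have "rvs A * z A = z A" using rz by (metis rev_rvs)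
      ultimately have "z A = - z A" by simp
      thus ?thesis using neg_ne[OF zA] by simp
    next
      case False
      hence n3: "n \<ge> 3" using n2 by simp
      have B: "{0, 1, 2} \<subseteq> {..<n}" "card {0::nat, 1, 2} = 2 \<or> card {0::nat, 1, 2} = 3" using n3 by auto
      have "A \<inter> {0, 1, 2} = {0, 1, 2}" using AN' n3 by auto
      hence "even (n * 3 + 3)" using key[OF B] AN' by simp
      hence "odd n" by simp
      thus ?thesis using AN' by simp
    qed
  qed simp
qed

lemma bar01_iff: fixes V :: "nat set \<Rightarrow> 'a" shows "V \<in> cl_bar2 n 0 1 \<longleftrightarrow> V \<in> cl_carrier n \<and> cl_rev V = V"
proof
  assume h: "V \<in> cl_bar2 n 0 1"
  have "cl_rev V = V"
  proof
    fix A show "cl_rev V A = V A"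
    proof (cases "V A = 0")
      case False
      hence "card A mod 4 = 0 \<or> card A mod 4 = 1" using h by (simp add: cl_bar2_def)
      hence "(rvs A :: 'a) = 1" by (simp add: rvs_val)
      thus ?thesis by (simp add: rev_rvs)
    qed (simp add: rev_rvs)
  qed
  thus "V \<in> cl_carrier n \<and> cl_rev V = V" using h by (simp add: cl_bar2_def)
next
  assume h: "V \<in> cl_carrier n \<and> cl_rev V = V"
  have "card A mod 4 = 0 \<or> card A mod 4 = 1" if VA: "V A \<noteq> 0" for A
  proof (rule ccontr)
    assume nc: "\<not> (card A mod 4 = 0 \<or> card A mod 4 = 1)"
    have e: "rvs A * V A = V A" using h by (metis rev_rvs)
    have r: "(rvs A :: 'a) = -1" using nc by (simp add: rvs_val)
    have "V A = - V A" using e unfolding r by simp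
    thus False using neg_ne[OF VA] by blast
  qed
  thus "V \<in> cl_bar2 n 0 1" using h by (simp add: cl_bar2_def)
qed

lemma mod4_cases: "(k::nat) mod 4 = 0 \<or> k mod 4 = 1 \<or> k mod 4 = 2 \<or> k mod 4 = 3" by arith

lemma bar23_iff: fixes V :: "nat set \<Rightarrow> 'a" shows "V \<in> cl_bar2 n 2 3 \<longleftrightarrow> V \<in> cl_carrier n \<and> cl_rev V = (\<lambda>A. - V A)"
proof
  assume h: "V \<in> cl_bar2 n 2 3"
  have "cl_rev V = (\<lambda>A. - V A)"
  proof
    fix A show "cl_rev V A = - V A"
    proof (cases "V A = 0")
      case False
      hence "card A mod 4 = 2 \<or> card A mod 4 = 3" using h by (simp add: cl_bar2_def)
      hence "(rvs A :: 'a) = -1" by (auto simp add: rvs_val)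
      thus ?thesis by (simp add: rev_rvs)
    qed (simp add: rev_rvs)
  qed
  thus "V \<in> cl_carrier n \<and> cl_rev V = (\<lambda>A. - V A)" using h by (simp add: cl_bar2_def)
next
  assume h: "V \<in> cl_carrier n \<and> cl_rev V = (\<lambda>A. - V A)"
  have "card A mod 4 = 2 \<or> card A mod 4 = 3" if VA: "V A \<noteq> 0" for A
  proof (rule ccontr)
    assume nc: "\<not> (card A mod 4 = 2 \<or> card A mod 4 = 3)"
    hence c01: "card A mod 4 = 0 \<or> card A mod 4 = 1" using mod4_cases[of "card A"] by blast
    have e: "rvs A * V A = - V A" using h by (metis rev_rvs)
    have r: "(rvs A :: 'a) = 1" using c01 by (auto simp add: rvs_val)
    have "V A = - V A" using e unfolding r by simp
    thus False using neg_ne[OF VA] by blast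
  qed
  thus "V \<in> cl_bar2 n 2 3" using h by (simp add: cl_bar2_def)
qed

end




context CL2
begin

lemma units_inv:
  assumes T: "T \<in> cl_units eta n"
  shows "T \<in> cl_carrier n" "cl_inv eta n T \<in> cl_carrier n"
    "T \<odot> cl_inv eta n T = cl_one" "cl_inv eta n T \<odot> T = cl_one"
proof -
  obtain S where S: "S \<in> cl_carrier n" "T \<odot> S = cl_one" "S \<odot> T = cl_one"
    and Tc: "T \<in> cl_carrier n" using T by (auto simp: cl_units_def)
  have uniq: "S' = S" if S': "S' \<in> cl_carrier n" "T \<odot> S' = cl_one" "S' \<odot> T = cl_one" for S'
  proof -
    have "S' = S' \<odot> (T \<odot> S)" using S(2) one_right[OF S'(1)] by simp
    also have "\<dots> = (S' \<odot> T) \<odot> S" by (simp add: assoc)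
    also have "\<dots> = S" using S'(3) one_left[OF S(1)] by simp
    finally show ?thesis .
  qed
  have e: "cl_inv eta n T = S" unfolding cl_inv_def
  proof (rule the_equality)
    show "S \<in> cl_carrier n \<and> T \<odot> S = cl_one \<and> S \<odot> T = cl_one" using S by blast
  next
    fix x assume "x \<in> cl_carrier n \<and> T \<odot> x = cl_one \<and> x \<odot> T = cl_one"
    thus "x = S" using uniq by blast
  qed
  show "T \<in> cl_carrier n" by (rule Tc)
  show "cl_inv eta n T \<in> cl_carrier n" unfolding e by (rule S(1))
  show "T \<odot> cl_inv eta n T = cl_one" unfolding e by (rule S(2))
  show "cl_inv eta n T \<odot> T = cl_one" unfolding e by (rule S(3))
qed

lemma mul_negl: "(\<lambda>A. - x A) \<odot> y = (\<lambda>A. - (x \<odot> y) A)"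
  by (rule ext) (simp add: cl_mult_def sum_negf)

lemma mul_negr: "x \<odot> (\<lambda>A. - y A) = (\<lambda>A. - (x \<odot> y) A)"
  by (rule ext) (simp add: cl_mult_def sum_negf)

lemma core:
  assumes T: "T \<in> cl_units eta n" and U: "U \<in> cl_carrier n"
  shows "(cl_rev (cl_inv eta n T) \<odot> U) \<odot> cl_rev T = (T \<odot> U) \<odot> cl_inv eta n T
     \<longleftrightarrow> U \<odot> (cl_rev T \<odot> T) = (cl_rev T \<odot> T) \<odot> U"
proof -
  define S where "S = cl_inv eta n T"
  define R where "R = cl_rev T"
  define R' where "R' = cl_rev S"
  note I = units_inv[OF T, folded S_def]
  have "R \<odot> R' = cl_rev (S \<odot> T)" unfolding R_def R'_def by (rule rev_mul[symmetric])
  hence RR': "R \<odot> R' = cl_one" using I(4) rev_one by simp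
  have "R' \<odot> R = cl_rev (T \<odot> S)" unfolding R_def R'_def by (rule rev_mul[symmetric])
  hence R'R: "R' \<odot> R = cl_one" using I(3) rev_one by simp
  have "(R' \<odot> U) \<odot> R = (T \<odot> U) \<odot> S \<longleftrightarrow> U \<odot> (R \<odot> T) = (R \<odot> T) \<odot> U"
  proof
    assume h: "(R' \<odot> U) \<odot> R = (T \<odot> U) \<odot> S"
    have "U \<odot> (R \<odot> T) = ((R \<odot> R') \<odot> U) \<odot> (R \<odot> T)" using one_left[OF U] RR' by simp
    also have "\<dots> = R \<odot> (((R' \<odot> U) \<odot> R) \<odot> T)" by (simp add: assoc)
    also have "\<dots> = R \<odot> (((T \<odot> U) \<odot> S) \<odot> T)" using h by simp
    also have "\<dots> = ((R \<odot> T) \<odot> U) \<odot> (S \<odot> T)" by (simp add: assoc)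
    also have "\<dots> = (R \<odot> T) \<odot> U" using I(4) one_right[OF mul_carrier] by simp
    finally show "U \<odot> (R \<odot> T) = (R \<odot> T) \<odot> U" .
  next
    assume h: "U \<odot> (R \<odot> T) = (R \<odot> T) \<odot> U"
    have "(R' \<odot> U) \<odot> R = ((R' \<odot> U) \<odot> R) \<odot> (T \<odot> S)" using I(3) one_right[OF mul_carrier] by simp
    also have "\<dots> = R' \<odot> ((U \<odot> (R \<odot> T)) \<odot> S)" by (simp add: assoc)
    also have "\<dots> = R' \<odot> (((R \<odot> T) \<odot> U) \<odot> S)" using h by simp
    also have "\<dots> = (R' \<odot> R) \<odot> ((T \<odot> U) \<odot> S)" by (simp add: assoc)
    also have "\<dots> = (T \<odot> U) \<odot> S" using R'R one_left[OF mul_carrier] by simp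
    finally show "(R' \<odot> U) \<odot> R = (T \<odot> U) \<odot> S" .
  qed
  thus ?thesis unfolding S_def R_def R'_def .
qed

lemma rev_conj: "cl_rev ((T \<odot> U) \<odot> S) = (cl_rev S \<odot> cl_rev U) \<odot> cl_rev T"
  by (simp add: rev_mul assoc)

lemma gamma01:
  assumes T: "T \<in> cl_units eta n"
  shows "T \<in> cl_Gamma eta n (cl_bar2 n 0 1) \<longleftrightarrow>
     (\<forall>U \<in> cl_bar2 n 0 1. U \<odot> (cl_rev T \<odot> T) = (cl_rev T \<odot> T) \<odot> U)"
proof -
  have "(T \<odot> U) \<odot> cl_inv eta n T \<in> cl_bar2 n 0 1 \<longleftrightarrow> U \<odot> (cl_rev T \<odot> T) = (cl_rev T \<odot> T) \<odot> U"
    if U: "U \<in> cl_bar2 n 0 1" for U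
  proof -
    have Uc: "U \<in> cl_carrier n" and rU: "cl_rev U = U" using U bar01_iff by auto
    have "(T \<odot> U) \<odot> cl_inv eta n T \<in> cl_bar2 n 0 1 \<longleftrightarrow>
          (cl_rev (cl_inv eta n T) \<odot> U) \<odot> cl_rev T = (T \<odot> U) \<odot> cl_inv eta n T"
      using bar01_iff[of "(T \<odot> U) \<odot> cl_inv eta n T"] mul_carrier rev_conj rU by simp
    thus ?thesis using core[OF T Uc] by simp
  qed
  thus ?thesis using T unfolding cl_Gamma_def by auto
qed

lemma gamma23:
  assumes T: "T \<in> cl_units eta n"
  shows "T \<in> cl_Gamma eta n (cl_bar2 n 2 3) \<longleftrightarrow>
     (\<forall>U \<in> cl_bar2 n 2 3. U \<odot> (cl_rev T \<odot> T) = (cl_rev T \<odot> T) \<odot> U)"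
proof -
  have "(T \<odot> U) \<odot> cl_inv eta n T \<in> cl_bar2 n 2 3 \<longleftrightarrow> U \<odot> (cl_rev T \<odot> T) = (cl_rev T \<odot> T) \<odot> U"
    if U: "U \<in> cl_bar2 n 2 3" for U
  proof -
    have Uc: "U \<in> cl_carrier n" and rU: "cl_rev U = (\<lambda>A. - U A)" using U bar23_iff by auto
    have neg_inj: "\<And>X Y :: nat set \<Rightarrow> 'a. (\<lambda>A. - X A) = (\<lambda>A. - Y A) \<longleftrightarrow> X = Y"
      by (auto simp: fun_eq_iff)
    have "cl_rev ((T \<odot> U) \<odot> cl_inv eta n T) = (\<lambda>A. - ((cl_rev (cl_inv eta n T) \<odot> U) \<odot> cl_rev T) A)"
      unfolding rev_conj rU mul_negr mul_negl ..
    hence "(T \<odot> U) \<odot> cl_inv eta n T \<in> cl_bar2 n 2 3 \<longleftrightarrow>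
          (cl_rev (cl_inv eta n T) \<odot> U) \<odot> cl_rev T = (T \<odot> U) \<odot> cl_inv eta n T"
      using bar23_iff[of "(T \<odot> U) \<odot> cl_inv eta n T"] mul_carrier neg_inj by simp
    thus ?thesis using core[OF T Uc] by simp
  qed
  thus ?thesis using T unfolding cl_Gamma_def by auto
qed

lemma A_iff:
  assumes T: "T \<in> cl_units eta n"
  shows "T \<in> cl_A eta n \<longleftrightarrow> cl_rev T \<odot> T \<in> cl_center n"
proof -
  define S where "S = cl_inv eta n T"
  note I = units_inv[OF T, folded S_def]
  have "cl_rev T \<odot> cl_rev S = cl_rev (S \<odot> T)" by (rule rev_mul[symmetric])
  hence RR': "cl_rev T \<odot> cl_rev S = cl_one" using I(4) rev_one by simp
  have "cl_rev S \<odot> cl_rev T = cl_rev (T \<odot> S)" by (rule rev_mul[symmetric])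
  hence R'R: "cl_rev S \<odot> cl_rev T = cl_one" using I(3) rev_one by simp
  have zu: "cl_rev T \<odot> T \<in> cl_units eta n"
    unfolding cl_units_def
  proof (intro CollectI conjI bexI[of _ "S \<odot> cl_rev S"])
    show "cl_rev T \<odot> T \<in> cl_carrier n" "S \<odot> cl_rev S \<in> cl_carrier n" by (rule mul_carrier)+
    have "(cl_rev T \<odot> T) \<odot> (S \<odot> cl_rev S) = cl_rev T \<odot> ((T \<odot> S) \<odot> cl_rev S)" by (simp add: assoc)
    also have "\<dots> = cl_one" using I(3) one_left[OF rev_carrier[OF I(2)]] RR' by simp
    finally show "(cl_rev T \<odot> T) \<odot> (S \<odot> cl_rev S) = cl_one" .
    have "(S \<odot> cl_rev S) \<odot> (cl_rev T \<odot> T) = S \<odot> ((cl_rev S \<odot> cl_rev T) \<odot> T)" by (simp add: assoc)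
    also have "\<dots> = cl_one" using R'R one_left[OF I(1)] I(4) by simp
    finally show "(S \<odot> cl_rev S) \<odot> (cl_rev T \<odot> T) = cl_one" .
  qed
  show ?thesis using T zu unfolding cl_A_def cl_center_units_def by auto
qed

lemma bas_bar01: "i < n \<Longrightarrow> bas {i} \<in> cl_bar2 n 0 1"
  by (auto simp: cl_bar2_def bas_def cl_carrier_def)

lemma bas_bar23: "B \<subseteq> {..<n} \<Longrightarrow> card B = 2 \<or> card B = 3 \<Longrightarrow> bas B \<in> cl_bar2 n 2 3"
  by (auto simp: cl_bar2_def bas_def cl_carrier_def)

lemma main_locale:
  assumes n2: "n \<ge> 2"
  shows "cl_A eta n = cl_Gamma eta n (cl_bar2 n 0 1) \<and> cl_A eta n = cl_Gamma eta n (cl_bar2 n 2 3)"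
proof -
  have unitsA: "T \<in> cl_units eta n" if "T \<in> cl_A eta n" for T using that by (simp add: cl_A_def)
  have unitsG: "T \<in> cl_units eta n" if "T \<in> cl_Gamma eta n L" for T L using that by (simp add: cl_Gamma_def)
  have e1: "T \<in> cl_A eta n \<longleftrightarrow> T \<in> cl_Gamma eta n (cl_bar2 n 0 1)" if T: "T \<in> cl_units eta n" for T
  proof -
    define z where "z = cl_rev T \<odot> T"
    have zc: "z \<in> cl_carrier n" unfolding z_def by (rule mul_carrier)
    have "z \<in> cl_center n \<longleftrightarrow> (\<forall>U \<in> cl_bar2 n 0 1. U \<odot> z = z \<odot> U)"
    proof
      assume "z \<in> cl_center n" thus "\<forall>U \<in> cl_bar2 n 0 1. U \<odot> z = z \<odot> U"
        using center_comm by metis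
    next
      assume h: "\<forall>U \<in> cl_bar2 n 0 1. U \<odot> z = z \<odot> U"
      show "z \<in> cl_center n"
        by (rule comm1_center[OF zc]) (use h bas_bar01 in metis)
    qed
    thus ?thesis using A_iff[OF T] gamma01[OF T] unfolding z_def by simp
  qed
  have e2: "T \<in> cl_A eta n \<longleftrightarrow> T \<in> cl_Gamma eta n (cl_bar2 n 2 3)" if T: "T \<in> cl_units eta n" for T
  proof -
    define z where "z = cl_rev T \<odot> T"
    have zc: "z \<in> cl_carrier n" unfolding z_def by (rule mul_carrier)
    have rz: "cl_rev z = z" unfolding z_def by (simp add: rev_mul rev_rev)
    have "z \<in> cl_center n \<longleftrightarrow> (\<forall>U \<in> cl_bar2 n 2 3. U \<odot> z = z \<odot> U)"
    proof
      assume "z \<in> cl_center n" thus "\<forall>U \<in> cl_bar2 n 2 3. U \<odot> z = z \<odot> U"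
        using center_comm by metis
    next
      assume h: "\<forall>U \<in> cl_bar2 n 2 3. U \<odot> z = z \<odot> U"
      show "z \<in> cl_center n"
        by (rule comm23_center[OF zc rz n2]) (use h bas_bar23 in metis)
    qed
    thus ?thesis using A_iff[OF T] gamma23[OF T] unfolding z_def by simp
  qed
  show ?thesis using e1 e2 unitsA unitsG by blast
qed

end

lemma CL2_real: "CL2 (real_sig p)"
  by unfold_locales (simp_all add: real_sig_def)

lemma CL2_complex: "CL2 complex_sig"
  by unfold_locales (simp_all add: complex_sig_def)

theorem mainTheorem6:
  fixes n :: nat
  assumes "n \<ge> 2"
  shows "(\<forall>p q. p + q = n \<longrightarrow>
            cl_A (real_sig p) n = cl_Gamma (real_sig p) n (cl_bar2 n 0 1) \<and>
            cl_A (real_sig p) n = cl_Gamma (real_sig p) n (cl_bar2 n 2 3)) \<and>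
         (cl_A complex_sig n = cl_Gamma complex_sig n (cl_bar2 n 0 1) \<and>
          cl_A complex_sig n = cl_Gamma complex_sig n (cl_bar2 n 2 3))"
  using CL2.main_locale[OF CL2_real assms] CL2.main_locale[OF CL2_complex assms] by blast



end
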